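(* Let $h(x)=\max\{s_+x,0\}+\min\{s_-x,0\}$ with $s_+>0$, $s_-\ge0$, $s_+\ne s_-$, applied entrywise, and consider $$\ell\big((W_j,b_j)_{j=1}^2\big)=\tfrac12\big\|W_2\,h(W_1X+b_1\mathbf{1}_3^T)+b_2\mathbf{1}_3^T-Y\big\|_F^2,$$ with $W_1\in\mathbb{R}^{2\times 2}$, $b_1\in\mathbb{R}^2$, $W_2\in\mathbb{R}^{1\times 2}$, $b_2\in\mathbb{R}$, and $X=\begin{bmatrix}1&0&\tfrac12\\0&1&\tfrac12\end{bmatrix}$, $Y=\begin{bmatrix}0&0&1\end{bmatrix}$. Then there is a tuple of parameters with $b_1=0$, $b_2=0$ at which $\ell=0$, and there is a tuple $(\hat W_j,\hat b_j)_{j=1}^2$ with $\hat b_1=0$, $\hat b_2=0$ at which the network output equals the linear least squares output $\begin{bmatrix}\tfrac13&\tfrac13&\tfrac13\end{bmatrix}$, $\ell=\tfrac13$, and which is a local minimum of $\ell$.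
   Context: $\mathbf{1}_3$ is the all-ones column vector in $\mathbb{R}^3$; $\|\cdot\|_F$ is the Frobenius norm. *)

theory Defs
  imports "HOL-Analysis.Analysis"
begin

definition act :: "real \<Rightarrow> real \<Rightarrow> real \<Rightarrow> real" where
  "act sp sm x = max (sp * x) 0 + min (sm * x) 0"

definition frob_norm :: "real^'n^'m \<Rightarrow> real" where
  "frob_norm A = sqrt (\<Sum>i\<in>UNIV. \<Sum>j\<in>UNIV. (A $ i $ j)\<^sup>2)"

definition Xdata :: "real^3^2" where
  "Xdata = vector [vector [1, 0, 1/2], vector [0, 1, 1/2]]"

definition Ydata :: "real^3^1" where
  "Ydata = vector [vector [0, 0, 1]]"

definition net_out :: "real \<Rightarrow> real \<Rightarrow> real^2^2 \<Rightarrow> real^2 \<Rightarrow> real^2^1 \<Rightarrow> real \<Rightarrow> real^3^1" where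
  "net_out sp sm W1 b1 W2 b2 =
     W2 ** (\<chi> k j. act sp sm ((W1 ** Xdata) $ k $ j + b1 $ k)) + (\<chi> i j. b2)"

definition loss :: "real \<Rightarrow> real \<Rightarrow> ((real^2^2) \<times> (real^2) \<times> (real^2^1) \<times> real) \<Rightarrow> real" where
  "loss sp sm p =
     (1/2) * (frob_norm (net_out sp sm (fst p) (fst (snd p)) (fst (snd (snd p))) (snd (snd (snd p)))
                - Ydata))\<^sup>2"

end

theory Submission
  imports Defs
begin

lemma X_entries:
  "Xdata$1$1 = 1" "Xdata$1$2 = 0" "Xdata$1$3 = 1/2"
  "Xdata$2$1 = 0" "Xdata$2$2 = 1" "Xdata$2$3 = 1/2"
  by (simp_all add: Xdata_def)

lemma Y_entries: "Ydata$1$1 = 0" "Ydata$1$2 = 0" "Ydata$1$3 = 1"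
  by (simp_all add: Ydata_def)

definition pre :: "real^2^2 \<Rightarrow> real^2 \<Rightarrow> 2 \<Rightarrow> 3 \<Rightarrow> real" where
  "pre W1 b1 k j = W1$k$1 * Xdata$1$j + W1$k$2 * Xdata$2$j + b1$k"

lemma net_out_nth:
  "net_out sp sm W1 b1 W2 b2 $ i $ j =
     W2$i$1 * act sp sm (pre W1 b1 1 j) + W2$i$2 * act sp sm (pre W1 b1 2 j) + b2"
  by (simp add: net_out_def pre_def matrix_matrix_mult_def sum_2)

lemma loss_eq:
  "loss sp sm (W1, b1, W2, b2) =
    (1/2) * ((net_out sp sm W1 b1 W2 b2 $1$1)\<^sup>2 + (net_out sp sm W1 b1 W2 b2 $1$2)\<^sup>2
           + (net_out sp sm W1 b1 W2 b2 $1$3 - 1)\<^sup>2)"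
proof -
  have "(frob_norm (net_out sp sm W1 b1 W2 b2 - Ydata))\<^sup>2 =
     ((net_out sp sm W1 b1 W2 b2 $1$1)\<^sup>2 + (net_out sp sm W1 b1 W2 b2 $1$2)\<^sup>2
           + (net_out sp sm W1 b1 W2 b2 $1$3 - 1)\<^sup>2)"
    unfolding frob_norm_def
    by (subst real_sqrt_pow2) (simp_all add: sum_3 Y_entries add_nonneg_nonneg)
  then show ?thesis by (simp add: loss_def)
qed

lemma pre_simps:
  "pre W1 b1 k 1 = W1$k$1 + b1$k"
  "pre W1 b1 k 2 = W1$k$2 + b1$k"
  "pre W1 b1 k 3 = W1$k$1/2 + W1$k$2/2 + b1$k"
  by (simp_all add: pre_def X_entries)

lemma act_pos: "z > 0 \<Longrightarrow> sp > 0 \<Longrightarrow> sm \<ge> 0 \<Longrightarrow> act sp sm z = sp * z"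
  by (simp add: act_def)

lemma entry_bound: "\<bar>(A::real^'n^'m)$k$i - B$k$i\<bar> \<le> dist A B"
proof -
  have "\<bar>(A - B)$k$i\<bar> \<le> norm ((A-B)$k)" by (rule component_le_norm_cart)
  also have "\<dots> \<le> norm (A - B)" by (rule Finite_Cartesian_Product.norm_nth_le)
  finally show ?thesis by (simp add: dist_norm)
qed

lemma vec_bound: "\<bar>(A::real^'n)$k - B$k\<bar> \<le> dist A B"
proof -
  have "\<bar>(A - B)$k\<bar> \<le> norm (A-B)" by (rule component_le_norm_cart)
  then show ?thesis by (simp add: dist_norm)
qed

lemma part1:
  fixes sp sm :: real
  assumes sp: "sp > 0" and sm: "sm \<ge> 0" and ne: "sp \<noteq> sm"
  shows "\<exists>W1 W2. loss sp sm (W1, 0, W2, 0) = 0"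
proof (cases "sm = 0")
  case True
  define W1 :: "real^2^2" where "W1 = vector [vector [1,0], vector [1,-1]]"
  define W2 :: "real^2^1" where "W2 = vector [vector [2/sp, -2/sp]]"
  have "loss sp sm (W1, 0, W2, 0) = 0"
    unfolding loss_eq net_out_nth pre_simps using sp True
    by (simp add: W1_def W2_def act_def)
  then show ?thesis by blast
next
  case False
  then have smp: "sm > 0" using sm by simp
  define H where "H = act sp sm ((sm^2 - sp^2)/2)"
  have "sm^2 \<noteq> sp^2" using ne sp sm by (metis power2_eq_iff_nonneg less_imp_le)
  then have "(sm^2 - sp^2)/2 > 0 \<or> (sm^2 - sp^2)/2 < 0" by auto
  then have H0: "H \<noteq> 0"
  proof
    assume h: "(sm^2 - sp^2)/2 > 0"
    have "sp * ((sm^2 - sp^2)/2) > 0" "sm * ((sm^2 - sp^2)/2) \<ge> 0" using h sp smp by (simp_all add: less_imp_le)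
    then have "H = sp * ((sm^2 - sp^2)/2)" unfolding H_def act_def by simp
    then show ?thesis using \<open>sp * ((sm^2 - sp^2)/2) > 0\<close> by simp
  next
    assume h: "(sm^2 - sp^2)/2 < 0"
    have "sp * ((sm^2 - sp^2)/2) < 0" "sm * ((sm^2 - sp^2)/2) < 0" using h sp smp
      by (simp_all add: mult_pos_neg)
    then have "H = sm * ((sm^2 - sp^2)/2)" unfolding H_def act_def by simp
    then show ?thesis using \<open>sm * ((sm^2 - sp^2)/2) < 0\<close> by simp
  qed
  define W1 :: "real^2^2" where "W1 = vector [vector [1,-1], vector [-(sp^2), sm^2]]"
  define W2 :: "real^2^1" where "W2 = vector [vector [sp * sm/H, 1/H]]"
  have a1: "act sp sm 1 = sp" "act sp sm (-1) = -sm" "act sp sm 0 = 0"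
    using sp sm by (auto simp: act_def)
  have a2: "act sp sm (-(sp^2)) = -(sm * sp^2)" "act sp sm (sm^2) = sp * sm^2"
    using sp sm by (auto simp: act_def max_def min_def mult_nonneg_nonneg mult_le_0_iff)
  have e3: "-(sp^2)/2 + sm^2/2 = (sm^2 - sp^2)/2" by (simp add: field_simps)
  have Hact: "act sp sm (-(sp^2)/2 + sm^2/2) = H" unfolding H_def by (simp add: diff_divide_distrib)
  have Hact2: "act sp sm ((sm * sm - sp * sp) / 2) = H" unfolding H_def by (simp add: power2_eq_square)
  have "loss sp sm (W1, 0, W2, 0) = 0"
    unfolding loss_eq net_out_nth pre_simps
    using H0 by (simp add: W1_def W2_def a1 a2 Hact) (simp add: field_simps power2_eq_square Hact2)
  then show ?thesis by blast
qed

lemma part2: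
  fixes sp sm :: real
  assumes sp: "sp > 0" and sm: "sm \<ge> 0"
  shows "\<exists>W1h W2h.
            net_out sp sm W1h 0 W2h 0 = vector [vector [1/3, 1/3, 1/3]] \<and>
            loss sp sm (W1h, 0, W2h, 0) = 1/3 \<and>
            (\<forall>\<^sub>F p in nhds (W1h, 0, W2h, 0). loss sp sm (W1h, 0, W2h, 0) \<le> loss sp sm p)"
proof -
  define W1h :: "real^2^2" where "W1h = (\<chi> i j. 1)"
  define W2h :: "real^2^1" where "W2h = (\<chi> i j. 1/(6 * sp))"
  have a1: "act sp sm 1 = sp" using sp sm by (simp add: act_def)
  have out: "net_out sp sm W1h 0 W2h 0 = vector [vector [1/3, 1/3, 1/3]]"
    unfolding vec_eq_iff forall_3 UNIV_1
    using sp by (auto simp: net_out_nth pre_simps W1h_def W2h_def a1 forall_3)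
  have l: "loss sp sm (W1h, 0, W2h, 0) = 1/3"
    unfolding loss_eq using out by (simp add: power2_eq_square)
  have ev: "\<forall>\<^sub>F p in nhds (W1h, (0::real^2), W2h, (0::real)). 1/3 \<le> loss sp sm p"
    unfolding eventually_nhds_metric
  proof (intro exI[of _ "1/4"] conjI allI impI)
    fix p :: "(real^2^2) \<times> (real^2) \<times> (real^2^1) \<times> real"
    assume d: "dist p (W1h, 0, W2h, 0) < 1/4"
    obtain W1 b1 W2 b2 where p: "p = (W1, b1, W2, b2)" by (cases p) auto
    have dW1: "dist W1 W1h < 1/4" using d dist_fst_le[of p "(W1h, 0, W2h, 0)"] p by simp
    have "dist (b1, W2, b2) ((0::real^2), W2h, (0::real)) < 1/4"
      using d dist_snd_le[of p "(W1h, 0, W2h, 0)"] p by simp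
    then have db1: "dist b1 0 < 1/4" using dist_fst_le[of "(b1, W2, b2)" "((0::real^2), W2h, (0::real))"] by simp
    have w: "\<bar>W1$k$i - 1\<bar> < 1/4" for k i
      using entry_bound[of W1 k i W1h] dW1 by (simp add: W1h_def)
    have b: "\<bar>b1$k\<bar> < 1/4" for k
      using vec_bound[of b1 k 0] db1 by simp
    have pos: "pre W1 b1 k j > 0" for k j
    proof -
      have "j = 1 \<or> j = 2 \<or> j = 3" using exhaust_3 by blast
      moreover have "\<bar>W1$k$1 - 1\<bar> < 1/4" "\<bar>W1$k$2 - 1\<bar> < 1/4" "\<bar>b1$k\<bar> < 1/4"
        using w b by auto
      ultimately show ?thesis unfolding abs_less_iff by (elim disjE) (simp_all add: pre_simps)
    qed
    have actl: "act sp sm (pre W1 b1 k j) = sp * pre W1 b1 k j" for k j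
      using act_pos[OF pos sp sm] .
    define o1 where "o1 = net_out sp sm W1 b1 W2 b2 $1$1"
    define o2 where "o2 = net_out sp sm W1 b1 W2 b2 $1$2"
    have o3: "net_out sp sm W1 b1 W2 b2 $1$3 = (o1 + o2)/2"
      unfolding o1_def o2_def net_out_nth actl by (simp add: pre_simps field_simps)
    have "loss sp sm p = (1/2) * (o1\<^sup>2 + o2\<^sup>2 + ((o1 + o2)/2 - 1)\<^sup>2)"
      unfolding p loss_eq o3 o1_def o2_def ..
    moreover have "(1/2) * (o1\<^sup>2 + o2\<^sup>2 + ((o1 + o2)/2 - 1)\<^sup>2) - 1/3
       = (3/8) * (o1 + o2 - 2/3)\<^sup>2 + (1/4) * (o1 - o2)\<^sup>2"
      unfolding power2_eq_square by (simp add: algebra_simps divide_simps)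
    moreover have "0 \<le> (3/8) * (o1 + o2 - 2/3)\<^sup>2 + (1/4) * (o1 - o2)\<^sup>2" by simp
    ultimately show "1/3 \<le> loss sp sm p" by linarith
  qed simp
  show ?thesis using out ev l by (intro exI[of _ W1h] exI[of _ W2h]) (simp only: l)
qed

theorem mainTheorem4:
  fixes sp sm :: real
  assumes "sp > 0" and "sm \<ge> 0" and "sp \<noteq> sm"
  shows "(\<exists>W1 W2. loss sp sm (W1, 0, W2, 0) = 0) \<and>
         (\<exists>W1h W2h.
            net_out sp sm W1h 0 W2h 0 = vector [vector [1/3, 1/3, 1/3]] \<and>
            loss sp sm (W1h, 0, W2h, 0) = 1/3 \<and>
            (\<forall>\<^sub>F p in nhds (W1h, 0, W2h, 0). loss sp sm (W1h, 0, W2h, 0) \<le> loss sp sm p))"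
  using part1[OF assms] part2[OF assms(1,2)] by blast

end
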